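(* For every $n\ge1$, the matrix $\left(h_{1-i-j}(X_1,\dots,X_n)\right)_{1\le i,j\le n}$ is invertible and $$\left[\left(h_{1-i-j}(X_1,\dots,X_n)\right)_{1\le i,j\le n}\right]^{-1}=\left((-1)^{i+j}e_{i+j-1}(X_1,\dots,X_n)\right)_{1\le i,j\le n},$$ where $e_m$ is the $m$-th elementary symmetric polynomial ($e_m=0$ for $m>n$).
   Context: Extended complete homogeneous symmetric functions: for $k\ge0$, $h_k(X_1,\dots,X_n)=\sum_{l_1+\dots+l_n=k,\ l_i\ge0}X_1^{l_1}\cdots X_n^{l_n}$; for $k<0$, $h_k(X_1,\dots,X_n)=(-1)^{n+1}\sum_{l_1+\dots+l_n=k,\ l_i<0}X_1^{l_1}\cdots X_n^{l_n}$. *)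

theory Defs
  imports Complex_Main
begin

definition hexps :: "nat \<Rightarrow> int \<Rightarrow> (nat \<Rightarrow> int) set" where
  "hexps n k =
     (if k \<ge> 0 then {l. (\<forall>i\<in>{1..n}. 0 \<le> l i) \<and> (\<forall>i. i \<notin> {1..n} \<longrightarrow> l i = 0)
                        \<and> (\<Sum>i=1..n. l i) = k}
      else {l. (\<forall>i\<in>{1..n}. l i < 0) \<and> (\<forall>i. i \<notin> {1..n} \<longrightarrow> l i = 0)
                        \<and> (\<Sum>i=1..n. l i) = k})"

definition hsym :: "nat \<Rightarrow> (nat \<Rightarrow> 'a::field) \<Rightarrow> int \<Rightarrow> 'a" where
  "hsym n X k =
     (if k \<ge> 0 then 1 else (-1) ^ (n + 1)) *
     (\<Sum>l\<in>hexps n k. \<Prod>i=1..n. X i powi l i)"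

definition esym :: "nat \<Rightarrow> (nat \<Rightarrow> 'a::comm_ring_1) \<Rightarrow> nat \<Rightarrow> 'a" where
  "esym n X m = (\<Sum>S\<in>{S. S \<subseteq> {1..n} \<and> card S = m}. \<Prod>i\<in>S. X i)"

end

theory Submission
  imports Defs "HOL-Computational_Algebra.Formal_Power_Series"
begin

definition negexps :: "nat \<Rightarrow> nat \<Rightarrow> (nat \<Rightarrow> int) set" where
  "negexps n m = {l. (\<forall>i\<in>{1..n}. l i < 0) \<and> (\<forall>i. i \<notin> {1..n} \<longrightarrow> l i = 0)
                        \<and> (\<Sum>i=1..n. l i) = - int m}"

definition gn :: "nat \<Rightarrow> (nat \<Rightarrow> 'a::field) \<Rightarrow> nat \<Rightarrow> 'a" where
  "gn n X m = (\<Sum>l\<in>negexps n m. \<Prod>i=1..n. X i powi l i)"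

lemma hsym_neg: "k < 0 \<Longrightarrow> hsym n X k = (-1)^(n+1) * gn n X (nat (-k))"
  unfolding hsym_def gn_def hexps_def negexps_def by simp

lemma negexps_0: "negexps 0 m = (if m = 0 then {\<lambda>_. 0} else {})"
  unfolding negexps_def by auto

lemma negexps_Suc: "negexps (Suc n) m =
   (\<Union>j\<in>{1..m}. (\<lambda>l. l(Suc n := - int j)) ` negexps n (m - j))"
proof (intro set_eqI iffI)
  fix l assume l: "l \<in> negexps (Suc n) m"
  have lneg: "\<forall>i\<in>{1..Suc n}. l i < 0" and lz: "\<forall>i. i \<notin> {1..Suc n} \<longrightarrow> l i = 0"
    and ls: "(\<Sum>i=1..Suc n. l i) = - int m"
    using l unfolding negexps_def by blast+
  define j where "j = nat (- l (Suc n))"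
  have neg: "l (Suc n) < 0" using lneg by simp
  have lj: "l (Suc n) = - int j" using neg unfolding j_def by simp
  have s: "(\<Sum>i=1..n. l i) + l (Suc n) = - int m"
    using ls by simp
  have "(\<Sum>i=1..n. l i) \<le> 0" using lneg
    by (intro sum_nonpos) (simp add: less_imp_le)
  hence jm: "j \<le> m" "1 \<le> j" using s lj neg by linarith+
  have s2: "(\<Sum>i=1..n. (l(Suc n := 0)) i) = (\<Sum>i=1..n. l i)"
    by (intro sum.cong) auto
  have "l(Suc n := 0) \<in> negexps n (m - j)"
    unfolding negexps_def
  proof (intro CollectI conjI allI ballI impI)
    fix i assume "i \<in> {1..n}" thus "(l(Suc n := 0)) i < 0" using lneg by simp
  next
    fix i assume i: "i \<notin> {1..n}"
    show "(l(Suc n := 0)) i = 0"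
    proof (cases "i = Suc n")
      case False hence "i \<notin> {1..Suc n}" using i by auto
      thus ?thesis using lz False by simp
    qed simp
  next
    show "(\<Sum>i=1..n. (l(Suc n := 0)) i) = - int (m - j)"
      unfolding s2 using s lj jm by (simp add: of_nat_diff)
  qed
  moreover have "l = (\<lambda>l. l(Suc n := - int j)) (l(Suc n := 0))" using lj by auto
  ultimately have mem: "l \<in> (\<lambda>l. l(Suc n := - int j)) ` negexps n (m - j)"
    by (intro image_eqI)
  have "j \<in> {1..m}" using jm by simp
  thus "l \<in> (\<Union>j\<in>{1..m}. (\<lambda>l. l(Suc n := - int j)) ` negexps n (m - j))"
    by (rule UN_I[where B="\<lambda>j. (\<lambda>l. l(Suc n := - int j)) ` negexps n (m - j)", OF _ mem])
next
  fix l assume "l \<in> (\<Union>j\<in>{1..m}. (\<lambda>l. l(Suc n := - int j)) ` negexps n (m - j))"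
  then obtain j l' where j: "j \<in> {1..m}" and l': "l' \<in> negexps n (m - j)"
    and l: "l = l'(Suc n := - int j)" by blast
  have lneg: "\<forall>i\<in>{1..n}. l' i < 0" and lz: "\<forall>i. i \<notin> {1..n} \<longrightarrow> l' i = 0"
    and ls: "(\<Sum>i=1..n. l' i) = - int (m - j)"
    using l' unfolding negexps_def by blast+
  have "(\<Sum>i=1..n. l i) = (\<Sum>i=1..n. l' i)" unfolding l by (intro sum.cong) auto
  hence s: "(\<Sum>i=1..Suc n. l i) = - int m"
    using ls j unfolding l by (simp add: of_nat_diff)
  show "l \<in> negexps (Suc n) m"
    unfolding negexps_def
  proof (intro CollectI conjI allI ballI impI s)
    fix i assume i: "i \<in> {1..Suc n}"
    show "l i < 0"
    proof (cases "i = Suc n")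
      case True thus ?thesis using j l by simp
    next
      case False hence "i \<in> {1..n}" using i by auto
      thus ?thesis using lneg False l by simp
    qed
  next
    fix i assume i: "i \<notin> {1..Suc n}"
    hence "i \<noteq> Suc n" "i \<notin> {1..n}" by auto
    thus "l i = 0" using lz l by simp
  qed
qed

lemma finite_negexps: "finite (negexps n m)"
proof (induction n arbitrary: m)
  case 0 thus ?case by (simp add: negexps_0)
next
  case (Suc n) thus ?case by (simp add: negexps_Suc)
qed

lemma gn_0: "gn 0 X m = (if m = 0 then 1 else 0)"
  unfolding gn_def by (simp add: negexps_0)

lemma gn_Suc: "gn (Suc n) X m = (\<Sum>j=1..m. X (Suc n) powi (- int j) * gn n X (m - j))"
proof -
  have "gn (Suc n) X m = (\<Sum>j=1..m. \<Sum>l\<in>(\<lambda>l. l(Suc n := - int j)) ` negexps n (m - j).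
          \<Prod>i=1..Suc n. X i powi l i)"
    unfolding gn_def negexps_Suc
    by (rule sum.UNION_disjoint) (auto simp: finite_negexps dest: fun_cong[where x="Suc n"])
  also have "\<dots> = (\<Sum>j=1..m. X (Suc n) powi (- int j) * gn n X (m - j))"
  proof (intro sum.cong refl)
    fix j assume j: "j \<in> {1..m}"
    have inj: "inj_on (\<lambda>l. l(Suc n := - int j)) (negexps n (m - j))"
    proof (rule inj_onI)
      fix a b assume a: "a \<in> negexps n (m - j)" and b: "b \<in> negexps n (m - j)"
        and e: "a(Suc n := - int j) = b(Suc n := - int j)"
      have "a (Suc n) = 0" "b (Suc n) = 0" using a b unfolding negexps_def by auto
      thus "a = b" using e by (metis fun_upd_triv fun_upd_upd)
    qed
    show "(\<Sum>l\<in>(\<lambda>l. l(Suc n := - int j)) ` negexps n (m - j). \<Prod>i=1..Suc n. X i powi l i)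
        = X (Suc n) powi (- int j) * gn n X (m - j)"
      unfolding gn_def sum.reindex[OF inj] sum_distrib_left comp_def
    proof (intro sum.cong refl)
      fix l assume "l \<in> negexps n (m - j)"
      have "(\<Prod>i=1..Suc n. (l(Suc n := - int j)) i) = 0 \<or> True" by simp
      have "(\<Prod>i=1..Suc n. X i powi (l(Suc n := - int j)) i)
          = (\<Prod>i=1..n. X i powi (l(Suc n := - int j)) i) * X (Suc n) powi (- int j)"
        by (simp add: prod.cl_ivl_Suc)
      also have "(\<Prod>i=1..n. X i powi (l(Suc n := - int j)) i) = (\<Prod>i=1..n. X i powi l i)"
        by (intro prod.cong) auto
      finally show "(\<Prod>i=1..Suc n. X i powi (l(Suc n := - int j)) i)
          = X (Suc n) powi (- int j) * (\<Prod>i=1..n. X i powi l i)" by simp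
    qed
  qed
  finally show ?thesis .
qed

lemma gn_small: "m < n \<Longrightarrow> gn n X m = 0"
proof (induction n arbitrary: m)
  case 0 thus ?case by simp
next
  case (Suc n)
  show ?case unfolding gn_Suc
    by (rule sum.neutral) (use Suc in auto)
qed

lemma esym_0: "esym n X 0 = 1"
proof -
  have "{S. S \<subseteq> {1..n} \<and> card S = 0} = {{}}"
    by (auto dest: finite_subset)
  thus ?thesis unfolding esym_def by simp
qed

lemma esym_big: "r > n \<Longrightarrow> esym n X r = 0"
proof -
  assume r: "r > n"
  have E: "{S. S \<subseteq> {1..n} \<and> card S = r} = {}"
  proof (rule ccontr)
    assume "{S. S \<subseteq> {1..n} \<and> card S = r} \<noteq> {}"
    then obtain S where S: "S \<subseteq> {1..n}" "card S = r" by blast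
    have "card S \<le> card {1..n}" using S(1) by (intro card_mono) auto
    thus False using S(2) r by simp
  qed
  show ?thesis unfolding esym_def E by simp
qed

lemma esym_Suc: "esym (Suc n) X (Suc r) = esym n X (Suc r) + X (Suc n) * esym n X r"
proof -
  have eq: "{S. S \<subseteq> {1..Suc n} \<and> card S = Suc r} =
      {S. S \<subseteq> {1..n} \<and> card S = Suc r} \<union> insert (Suc n) ` {S. S \<subseteq> {1..n} \<and> card S = r}"
  proof (intro set_eqI iffI)
    fix S assume S: "S \<in> {S. S \<subseteq> {1..Suc n} \<and> card S = Suc r}"
    show "S \<in> {S. S \<subseteq> {1..n} \<and> card S = Suc r} \<union> insert (Suc n) ` {S. S \<subseteq> {1..n} \<and> card S = r}"
    proof (cases "Suc n \<in> S")
      case True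
      have fin: "finite S" using S finite_subset by auto
      have "S - {Suc n} \<subseteq> {1..n}" using S by auto
      moreover have "card (S - {Suc n}) = r" using S True fin by simp
      moreover have "S = insert (Suc n) (S - {Suc n})" using True by auto
      ultimately show ?thesis by blast
    next
      case False
      hence "S \<subseteq> {1..n}" using S by (auto simp: le_Suc_eq)
      thus ?thesis using S by auto
    qed
  next
    fix S assume "S \<in> {S. S \<subseteq> {1..n} \<and> card S = Suc r} \<union> insert (Suc n) ` {S. S \<subseteq> {1..n} \<and> card S = r}"
    thus "S \<in> {S. S \<subseteq> {1..Suc n} \<and> card S = Suc r}"
    proof
      assume "S \<in> {S. S \<subseteq> {1..n} \<and> card S = Suc r}" thus ?thesis by auto
    next
      assume "S \<in> insert (Suc n) ` {S. S \<subseteq> {1..n} \<and> card S = r}"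
      then obtain T where T: "T \<subseteq> {1..n}" "card T = r" "S = insert (Suc n) T" by auto
      have "finite T" using T(1) finite_subset by auto
      moreover have "Suc n \<notin> T" using T(1) by auto
      ultimately show ?thesis using T by auto
    qed
  qed
  have fin1: "finite {S. S \<subseteq> {1..n} \<and> card S = k}" for k
    by (rule finite_subset[of _ "Pow {1..n}"]) auto
  have inj: "inj_on (insert (Suc n)) {S. S \<subseteq> {1..n} \<and> card S = r}"
    by (rule inj_onI) (metis (no_types, lifting) atLeastAtMost_iff insert_ident mem_Collect_eq
        not_less_eq_eq order_refl subsetD)
  have "esym (Suc n) X (Suc r) = esym n X (Suc r) +
     (\<Sum>S\<in>insert (Suc n) ` {S. S \<subseteq> {1..n} \<and> card S = r}. \<Prod>i\<in>S. X i)"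
    unfolding esym_def eq
    by (rule sum.union_disjoint) (auto simp: fin1)
  also have "(\<Sum>S\<in>insert (Suc n) ` {S. S \<subseteq> {1..n} \<and> card S = r}. \<Prod>i\<in>S. X i)
      = X (Suc n) * esym n X r"
    unfolding esym_def sum.reindex[OF inj] sum_distrib_left comp_def
  proof (intro sum.cong refl)
    fix S assume S: "S \<in> {S. S \<subseteq> {1..n} \<and> card S = r}"
    have "finite S" using S finite_subset by auto
    moreover have "Suc n \<notin> S" using S by auto
    ultimately show "prod X (insert (Suc n) S) = X (Suc n) * prod X S" by simp
  qed
  finally show ?thesis .
qed

unbundle fps_syntax

definition ec :: "nat \<Rightarrow> (nat \<Rightarrow> 'a::field) \<Rightarrow> nat \<Rightarrow> 'a" where
  "ec n X a = (if a \<le> n then (-1)^(n-a) * esym n X (n-a) else 0)"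

lemma ec_Suc: "ec (Suc n) X a = (if a = 0 then 0 else ec n X (a-1)) - X (Suc n) * ec n X a"
proof -
  consider "a = 0" | b where "a = Suc b" "b < n" | "a = Suc n" | "a > Suc n"
    by (cases a) (auto, linarith)
  thus ?thesis
  proof cases
    case 1
    have "ec (Suc n) X a = (-1)^(Suc n) * esym (Suc n) X (Suc n)"
      using 1 by (simp add: ec_def)
    also have "\<dots> = (-1)^(Suc n) * (X (Suc n) * esym n X n)"
      using esym_Suc[of n X n] esym_big[of n "Suc n" X] by simp
    also have "\<dots> = 0 - X (Suc n) * ec n X a"
      using 1 by (simp add: ec_def)
    finally show ?thesis using 1 by simp
  next
    case 2
    have e: "Suc n - a = Suc (n - a)" "n - b = Suc (n - a)" using 2 by auto
    have "ec (Suc n) X a = (-1)^(Suc (n - a)) * esym (Suc n) X (Suc (n - a))"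
      using 2 e by (simp add: ec_def)
    also have "\<dots> = (-1)^(Suc (n - a)) * (esym n X (Suc (n - a)) + X (Suc n) * esym n X (n - a))"
      by (simp only: esym_Suc)
    also have "\<dots> = (-1)^(n - b) * esym n X (n - b) - X (Suc n) * ((-1)^(n - a) * esym n X (n - a))"
      unfolding e by (simp add: algebra_simps)
    also have "\<dots> = ec n X (a - 1) - X (Suc n) * ec n X a"
      using 2 by (simp add: ec_def)
    finally show ?thesis using 2 by simp
  next
    case 3
    thus ?thesis by (simp add: ec_def esym_0)
  next
    case 4
    thus ?thesis by (simp add: ec_def)
  qed
qed

definition Qf :: "'a::field \<Rightarrow> 'a fps" where
  "Qf c = Abs_fps (\<lambda>j. if j = 0 then 0 else c powi (- int j))"

lemma Qf_prod: "c \<noteq> 0 \<Longrightarrow> (fps_X - fps_const c) * Qf c = - fps_X"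
proof (rule fps_ext)
  fix k assume c: "c \<noteq> 0"
  show "((fps_X - fps_const c) * Qf c) $ k = (- fps_X) $ k"
  proof -
    have "((fps_X - fps_const c) * Qf c) $ k = (fps_X * Qf c) $ k - (fps_const c * Qf c) $ k"
      by (simp add: left_diff_distrib)
    also have "\<dots> = (- fps_X) $ k"
    proof (cases k)
      case 0 thus ?thesis by (simp add: Qf_def)
    next
      case (Suc b)
      show ?thesis
      proof (cases b)
        case 0 thus ?thesis using Suc c by (simp add: Qf_def fps_X_def power_int_minus)
      next
        case (Suc b')
        have "c powi (- int (Suc b)) = inverse c ^ Suc b"
          by (simp only: power_int_minus power_int_of_nat power_inverse)
        moreover have "c powi (- int b) = inverse c ^ b"
          by (simp add: power_int_minus power_inverse)
        ultimately show ?thesis using \<open>k = Suc b\<close> Suc c by (simp add: Qf_def)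
      qed
    qed
    finally show ?thesis .
  qed
qed

definition Ef :: "nat \<Rightarrow> (nat \<Rightarrow> 'a::field) \<Rightarrow> 'a fps" where
  "Ef n X = Abs_fps (ec n X)"
definition Gf :: "nat \<Rightarrow> (nat \<Rightarrow> 'a::field) \<Rightarrow> 'a fps" where
  "Gf n X = Abs_fps (gn n X)"

lemma Ef_Suc: "Ef (Suc n) X = Ef n X * (fps_X - fps_const (X (Suc n)))"
proof -
  have "Ef n X * (fps_X - fps_const (X (Suc n))) = fps_X * Ef n X - fps_const (X (Suc n)) * Ef n X"
    by (simp add: right_diff_distrib mult.commute)
  also have "\<dots> = Ef (Suc n) X"
    by (rule fps_ext) (simp add: Ef_def ec_Suc)
  finally show ?thesis by simp
qed

lemma Gf_Suc: "Gf (Suc n) X = Qf (X (Suc n)) * Gf n X"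
proof (rule fps_ext)
  fix m
  have "(Qf (X (Suc n)) * Gf n X) $ m = (\<Sum>i=0..m. Qf (X (Suc n)) $ i * gn n X (m - i))"
    by (simp add: fps_mult_nth Gf_def)
  also have "\<dots> = (\<Sum>i=Suc 0..m. Qf (X (Suc n)) $ i * gn n X (m - i))"
    by (simp add: sum.atLeast_Suc_atMost Qf_def)
  also have "\<dots> = gn (Suc n) X m"
    unfolding gn_Suc by (intro sum.cong) (auto simp: Qf_def)
  finally show "Gf (Suc n) X $ m = (Qf (X (Suc n)) * Gf n X) $ m" by (simp add: Gf_def)
qed

lemma EG: "\<forall>i\<in>{1..n}. X i \<noteq> 0 \<Longrightarrow> Ef n X * Gf n X = (- fps_X) ^ n"
proof (induction n)
  case 0
  have "Ef 0 X = 1" by (rule fps_ext) (simp add: Ef_def ec_def esym_0)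
  moreover have "Gf 0 X = 1" by (rule fps_ext) (simp add: Gf_def gn_0)
  ultimately show ?case by simp
next
  case (Suc n)
  have "Ef (Suc n) X * Gf (Suc n) X
      = (Ef n X * Gf n X) * ((fps_X - fps_const (X (Suc n))) * Qf (X (Suc n)))"
    by (simp add: Ef_Suc Gf_Suc algebra_simps)
  also have "\<dots> = (- fps_X) ^ n * (- fps_X)"
    using Suc by (simp add: Qf_prod)
  finally show ?case by simp
qed

lemma negX_pow: "((- fps_X :: 'a::comm_ring_1 fps)^n) $ k = (if k = n then (-1)^n else 0)"
  by (induction n arbitrary: k) (auto simp: fps_X_mult_nth)

lemma key: "\<forall>i\<in>{1..n}. X i \<noteq> 0 \<Longrightarrow>
  (\<Sum>s=0..n. (-1)^s * esym n X s * gn n X (d+s)) = (-1)^n * (if d = 0 then 1 else 0)"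
proof -
  assume nz: "\<forall>i\<in>{1..n}. X i \<noteq> 0"
  have "(Ef n X * Gf n X) $ (n + d) = (- fps_X :: 'a fps) ^ n $ (n + d)" using EG[OF nz] by simp
  also have "\<dots> = (-1)^n * (if d = 0 then 1 else 0)"
    by (simp only: negX_pow) simp
  finally have 1: "(\<Sum>a=0..n+d. ec n X a * gn n X (n + d - a)) = (-1)^n * (if d = 0 then 1 else 0)"
    by (simp add: fps_mult_nth Ef_def Gf_def)
  have "(\<Sum>a=0..n+d. ec n X a * gn n X (n + d - a)) = (\<Sum>a=0..n. ec n X a * gn n X (n + d - a))"
    by (intro sum.mono_neutral_right) (auto simp: ec_def)
  also have "\<dots> = (\<Sum>a=0..n. ec n X (n - a) * gn n X (n + d - (n - a)))"
    using sum.atLeastAtMost_rev[of "\<lambda>a. ec n X a * gn n X (n + d - a)" 0 n] by simp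
  also have "\<dots> = (\<Sum>s=0..n. (-1)^s * esym n X s * gn n X (d+s))"
    by (intro sum.cong) (auto simp: ec_def add.commute)
  finally show ?thesis using 1 by simp
qed


lemma AB_entry:
  fixes X :: "nat \<Rightarrow> 'a::field"
  assumes nz: "\<forall>i\<in>{1..n}. X i \<noteq> 0" and i: "i \<in> {1..n}" and j: "j \<in> {1..n}"
  shows "(\<Sum>k=1..n. ((-1)^(n+1) * gn n X (i+k-1)) * ((-1)^(k+j) * esym n X (k+j-1)))
         = (if i = j then 1 else 0)"
proof (cases "i < j")
  case True
  have "(\<Sum>k=1..n. ((-1)^(n+1) * gn n X (i+k-1)) * ((-1)^(k+j) * esym n X (k+j-1))) = 0"
  proof (rule sum.neutral, intro ballI)
    fix k assume k: "k \<in> {1..n}"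
    show "((-1)^(n+1) * gn n X (i+k-1)) * ((-1)^(k+j) * esym n X (k+j-1)) = 0"
    proof (cases "i+k-1 < n")
      case True thus ?thesis by (simp add: gn_small)
    next
      case False
      hence "k+j-1 > n" using \<open>i < j\<close> k by auto
      thus ?thesis by (simp add: esym_big)
    qed
  qed
  thus ?thesis using True by simp
next
  case False
  define d where "d = i - j"
  define f where "f s = (-1)^(n+1) * gn n X (d+s) * ((-1)^(s+1) * esym n X s)" for s
  have "(\<Sum>k=1..n. ((-1)^(n+1) * gn n X (i+k-1)) * ((-1)^(k+j) * esym n X (k+j-1)))
      = (\<Sum>k=1..n. f (k + (j-1)))"
  proof (intro sum.cong refl)
    fix k assume k: "k \<in> {1..n}"
    have e1: "i+k-1 = d + (k + (j-1))" using False k j unfolding d_def by arith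
    have e2: "k+j-1 = k + (j-1)" using j by arith
    have e3: "k+j = k + (j-1) + 1" using j by arith
    have e4: "k + (j-1) + 1 - 1 = k + (j-1)" by simp
    show "((-1)^(n+1) * gn n X (i+k-1)) * ((-1)^(k+j) * esym n X (k+j-1)) = f (k + (j-1))"
      unfolding f_def by (simp only: e1 e2 e3 e4 mult.assoc)
  qed
  also have "\<dots> = (\<Sum>s=j..n+(j-1). f s)"
    using sum.shift_bounds_cl_nat_ivl[of f 1 "j-1" n] j by simp
  also have "\<dots> = (\<Sum>s=j..n. f s)"
    by (intro sum.mono_neutral_right) (auto simp: f_def esym_big)
  also have "\<dots> = (\<Sum>s=0..n. f s)"
  proof (rule sym, intro sum.mono_neutral_right)
    show "\<forall>s\<in>{0..n} - {j..n}. f s = 0"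
      using False i unfolding f_def d_def by (auto simp: gn_small)
  qed auto
  also have "\<dots> = (-1)^n * (\<Sum>s=0..n. (-1)^s * esym n X s * gn n X (d+s))"
    unfolding sum_distrib_left f_def by (intro sum.cong) (auto simp: algebra_simps)
  also have "\<dots> = (if d = 0 then 1 else 0)"
    using key[OF nz, of d] by (simp flip: power_add add: mult_2[symmetric])
  finally show ?thesis using False unfolding d_def by auto
qed

theorem mainTheorem14:
  fixes n :: nat and X :: "nat \<Rightarrow> 'a::field"
  assumes "n \<ge> 1" and "\<forall>i\<in>{1..n}. X i \<noteq> 0"
  defines "A \<equiv> (\<lambda>i j. hsym n X (1 - int i - int j))"
      and "B \<equiv> (\<lambda>i j. (-1) ^ (i + j) * esym n X (i + j - 1))"
  shows "(\<forall>i\<in>{1..n}. \<forall>j\<in>{1..n}. (\<Sum>k=1..n. A i k * B k j) = (if i = j then 1 else 0))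
       \<and> (\<forall>i\<in>{1..n}. \<forall>j\<in>{1..n}. (\<Sum>k=1..n. B i k * A k j) = (if i = j then 1 else 0))"
proof -
  have Aeq: "A i k = (-1)^(n+1) * gn n X (i+k-1)" if "i \<ge> 1" "k \<ge> 1" for i k
  proof -
    have "nat (- (1 - int i - int k)) = i + k - 1" using that by simp
    thus ?thesis unfolding A_def using that by (simp add: hsym_neg)
  qed
  have 1: "(\<Sum>k=1..n. A i k * B k j) = (if i = j then 1 else 0)"
    if i: "i \<in> {1..n}" and j: "j \<in> {1..n}" for i j
  proof -
    have "(\<Sum>k=1..n. A i k * B k j)
        = (\<Sum>k=1..n. ((-1)^(n+1) * gn n X (i+k-1)) * ((-1)^(k+j) * esym n X (k+j-1)))"
      by (intro sum.cong refl) (use i in \<open>auto simp: Aeq B_def\<close>)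
    thus ?thesis using AB_entry[OF assms(2) i j] by simp
  qed
  have 2: "(\<Sum>k=1..n. B i k * A k j) = (if i = j then 1 else 0)"
    if i: "i \<in> {1..n}" and j: "j \<in> {1..n}" for i j
  proof -
    have "(\<Sum>k=1..n. B i k * A k j) = (\<Sum>k=1..n. A j k * B k i)"
    proof (intro sum.cong refl)
      fix k
      have "A k j = A j k" unfolding A_def by (rule arg_cong[of _ _ "hsym n X"]) simp
      moreover have "B i k = B k i" unfolding B_def by (simp add: add.commute)
      ultimately show "B i k * A k j = A j k * B k i" by (simp add: mult.commute)
    qed
    thus ?thesis using 1[OF j i] by auto
  qed
  show ?thesis using 1 2 by blast
qed

end
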